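(* Let $N\ge1$, $D>0$, $b_1,\dots,b_N>0$, $0<r_1<\cdots<r_N$, and let $k_0$ be as in the context. For integers $k\ge k_0$ let $p^k\pm iq^k$ ($p^k,q^k\in\mathbb R$, $q^k>0$) be the two non-real roots of $P_N^k$. Then there are constants $M_2,M_3>0$ independent of $k$ such that for all sufficiently large $k\ge k_0$, $$\Big|p^k+\frac{1}{2D}\sum_{j=1}^N b_j\Big|\le\frac{M_2}{k^2},\qquad \big|q^k-(2k-1)\sqrt D\big|\le \frac{M_3}{2k-1}.$$
   Context: Standing assumptions: $N\in\mathbb N$, $D>0$, $b_i>0$, $0<r_1<\cdots<r_N$. $P_N^k(\lambda)=\big(D+\frac{\lambda^2}{(2k-1)^2}\big)\prod_{j=1}^N(\lambda+r_j)-\sum_{i=1}^N b_i\prod_{j\neq i}(\lambda+r_j)$ for $k\in\mathbb N$, a real polynomial of degree $N+2$. $k_0$ is a threshold such that for all integers $k\ge k_0$, $P_N^k$ has exactly $N$ real roots, all simple, interlacing with $-r_N<a_N^k<-r_{N-1}<\cdots<-r_1<a_1^k$, and its two remaining roots are simple non-real complex conjugates. *)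

theory Defs
  imports "HOL-Analysis.Analysis" "HOL-Computational_Algebra.Polynomial"
begin

definition PNk :: "nat \<Rightarrow> real \<Rightarrow> (nat \<Rightarrow> real) \<Rightarrow> (nat \<Rightarrow> real) \<Rightarrow> nat \<Rightarrow> real poly" where
  "PNk N D b r k =
     ([:D:] + [:0, 0, 1 / (2 * real k - 1)^2:]) * (\<Prod>j\<in>{1..N}. [:r j, 1:])
     - (\<Sum>i\<in>{1..N}. smult (b i) (\<Prod>j\<in>{1..N} - {i}. [:r j, 1:]))"

text \<open>The threshold property of k0 from the standing assumptions, for a fixed k.\<close>
definition root_structure :: "nat \<Rightarrow> (nat \<Rightarrow> real) \<Rightarrow> real poly \<Rightarrow> bool" where
  "root_structure N r P \<longleftrightarrow>
     P \<noteq> 0 \<and>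
     (\<exists>a :: nat \<Rightarrow> real.
        {x. poly P x = 0} = a ` {1..N} \<and> inj_on a {1..N} \<and>
        (\<forall>i\<in>{1..N}. order (a i) P = 1) \<and>
        -r 1 < a 1 \<and> (\<forall>i\<in>{2..N}. -r i < a i \<and> a i < -r (i - 1))) \<and>
     (\<exists>z :: complex. Im z \<noteq> 0 \<and>
        {w. poly (map_poly complex_of_real P) w = 0 \<and> Im w \<noteq> 0} = {z, cnj z} \<and>
        order z (map_poly complex_of_real P) = 1 \<and>
        order (cnj z) (map_poly complex_of_real P) = 1)"

end

theory Submission imports Defs "HOL-Analysis.Analysis" begin
lemma core:
  fixes x y e D R :: real and b r :: "nat \<Rightarrow> real" and A :: "nat set"
  assumes fin: "finite A" and ne: "A \<noteq> {}" and y: "y > 0" and e: "e > 0" and D: "D > 0"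
    and bpos: "\<forall>i\<in>A. b i > 0" and rpos: "\<forall>i\<in>A. 0 < r i \<and> r i \<le> R"
    and small: "4 * R^2 * e \<le> D"
    and re: "D + e * (x^2 - y^2) = (\<Sum>i\<in>A. b i * (x + r i) / ((x + r i)^2 + y^2))"
    and im: "2 * e * x = - (\<Sum>i\<in>A. b i / ((x + r i)^2 + y^2))"
  defines "B \<equiv> (\<Sum>i\<in>A. b i)"
  defines "L \<equiv> B / D + R"
  defines "K1 \<equiv> (B/D)^2 + 2 * B * L / D"
  shows "\<bar>x + B / (2 * D)\<bar> \<le> B * e * (L^2 + K1) / D^2 \<and> \<bar>y^2 - D / e\<bar> \<le> K1"
proof -
  define d where "d i = (x + r i)^2 + y^2" for i
  define S where "S = (\<Sum>i\<in>A. b i / d i)"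
  define T where "T = (\<Sum>i\<in>A. b i * (x + r i) / d i)"
  have dpos: "d i \<ge> y^2" "d i > 0" for i using y by (auto simp: d_def intro: add_nonneg_pos)
  have re': "D + e * (x^2 - y^2) = T" using re by (simp add: T_def d_def)
  have im': "2 * e * x = - S" using im by (simp add: S_def d_def)
  have Spos: "S > 0" unfolding S_def using fin ne bpos dpos
    by (intro sum_pos) auto
  have "2 * e * x < 0" using im' Spos by simp
  then have xneg: "x < 0" using e by (simp add: mult_less_0_iff)
  have R0: "R > 0" using ne rpos by auto
  have Bpos: "B > 0" unfolding B_def using fin ne bpos by (intro sum_pos) auto
  have TleRS: "T \<le> R * S"
  proof -
    have "T \<le> (\<Sum>i\<in>A. R * (b i / d i))" unfolding T_def
    proof (intro sum_mono)
      fix i assume i: "i \<in> A"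
      have "b i * (x + r i) \<le> b i * R" using i bpos rpos xneg
        by (intro mult_left_mono) auto
      then have "b i * (x + r i) / d i \<le> b i * R / d i"
        using dpos[of i] by (intro divide_right_mono) auto
      then show "b i * (x + r i) / d i \<le> R * (b i / d i)" by (simp add: mult.commute)
    qed
    also have "\<dots> = R * S" by (simp add: S_def sum_distrib_left)
    finally show ?thesis .
  qed
  have Tsmall: "T \<le> 2 * e * R^2"
  proof (cases "x \<le> - R")
    case True
    have "T \<le> 0" unfolding T_def
    proof (intro sum_nonpos)
      fix i assume i: "i \<in> A"
      have "b i * (x + r i) \<le> 0" using i bpos rpos True
        by (intro mult_nonneg_nonpos) auto
      then show "b i * (x + r i) / d i \<le> 0" using dpos[of i] by (simp add: divide_nonpos_pos)
    qed
    moreover have "0 \<le> 2 * e * R^2" using e by (intro mult_nonneg_nonneg) auto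
    ultimately show ?thesis by linarith
  next
    case False
    have "R * S = R * (2 * e * (-x))" using im' by simp
    also have "\<dots> \<le> R * (2 * e * R)" using False R0 e
      by (intro mult_left_mono) auto
    finally show ?thesis using TleRS by (simp add: power2_eq_square algebra_simps)
  qed
  have ey2: "e * y^2 \<ge> D / 2"
  proof -
    have "e * y^2 = e * x^2 + D - T" using re' by (simp add: algebra_simps)
    moreover have "e * x^2 \<ge> 0" using e by simp
    moreover have "4 * R^2 * e = 2 * (2 * e * R^2)" by (simp add: ac_simps)
    then have "2 * e * R^2 \<le> D / 2" using small by linarith
    ultimately show ?thesis using Tsmall by linarith
  qed
  have dlow: "d i \<ge> D / (2 * e)" for i
  proof -
    have "D / (2 * e) \<le> y^2" using ey2 e by (simp add: field_simps)
    then show ?thesis using dpos(1)[of i] by linarith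
  qed
  have Sle: "S \<le> 2 * e * B / D"
  proof -
    have "S \<le> (\<Sum>i\<in>A. b i * (2 * e / D))" unfolding S_def
    proof (intro sum_mono)
      fix i assume i: "i \<in> A"
      have "1 / d i \<le> 1 / (D / (2 * e))"
        using dlow[of i] dpos[of i] D e by (intro divide_left_mono) (auto intro!: mult_pos_pos divide_pos_pos)
      then have "b i / d i \<le> b i * (1 / (D / (2*e)))" using bpos i
        by (metis mult_left_mono less_imp_le times_divide_eq_right mult.right_neutral)
      then show "b i / d i \<le> b i * (2 * e / D)" by simp
    qed
    also have "\<dots> = B * (2 * e / D)" unfolding B_def by (rule sum_distrib_right[symmetric])
    also have "\<dots> = 2 * e * B / D" by simp
    finally show ?thesis .
  qed
  have xabs: "- x \<le> B / D"
  proof -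
    have "- x = S / (2 * e)" using im' e by (simp add: field_simps)
    also have "\<dots> \<le> (2 * e * B / D) / (2 * e)" using Sle e by (intro divide_right_mono) auto
    also have "\<dots> = B / D" using e by simp
    finally show ?thesis .
  qed
  have Lb: "\<bar>x + r i\<bar> \<le> L" if "i \<in> A" for i
    using that rpos xneg xabs unfolding L_def by auto
  have L0: "L \<ge> 0" using Bpos D R0 unfolding L_def by simp
  have Tabs: "\<bar>T\<bar> \<le> L * S"
  proof -
    have "\<bar>T\<bar> \<le> (\<Sum>i\<in>A. \<bar>b i * (x + r i) / d i\<bar>)" unfolding T_def by (rule sum_abs)
    also have "\<dots> \<le> (\<Sum>i\<in>A. L * (b i / d i))"
    proof (intro sum_mono)
      fix i assume i: "i \<in> A"
      have "\<bar>b i * (x + r i) / d i\<bar> = (b i / d i) * \<bar>x + r i\<bar>"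
        using bpos[rule_format, OF i] dpos[of i] by (simp add: abs_mult)
      also have "\<dots> \<le> (b i / d i) * L" using Lb[OF i] bpos i dpos[of i]
        by (intro mult_left_mono) auto
      finally show "\<bar>b i * (x + r i) / d i\<bar> \<le> L * (b i / d i)" by (simp only: mult.commute)
    qed
    also have "\<dots> = L * S" by (simp add: S_def sum_distrib_left)
    finally show ?thesis .
  qed
  have Tabs2: "\<bar>T\<bar> / e \<le> 2 * B * L / D"
  proof -
    have "\<bar>T\<bar> \<le> L * (2 * e * B / D)" using Tabs Sle L0 by (meson mult_left_mono order_trans)
    then show ?thesis using e by (simp add: field_simps)
  qed
  have x2: "x^2 \<le> (B/D)^2"
  proof -
    have "\<bar>x\<bar> \<le> B / D" using xneg xabs by simp
    then show ?thesis by (metis abs_ge_zero power2_abs power_mono)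
  qed
  have yeq: "y^2 - D / e = x^2 - T / e" using re' e by (simp add: field_simps)
  have ybound: "\<bar>y^2 - D / e\<bar> \<le> K1"
  proof -
    have Te: "\<bar>T / e\<bar> = \<bar>T\<bar> / e" using e by simp
    have "\<bar>x^2 - T / e\<bar> \<le> \<bar>x^2\<bar> + \<bar>T / e\<bar>" by (rule abs_triangle_ineq4)
    then have "\<bar>x^2 - T / e\<bar> \<le> x^2 + \<bar>T\<bar> / e" unfolding Te by simp
    then show ?thesis using yeq x2 Tabs2 unfolding K1_def by linarith
  qed
  have eyD: "\<bar>e * y^2 - D\<bar> \<le> e * K1"
  proof -
    have "e * y^2 - D = e * (y^2 - D / e)" using e by (simp add: field_simps)
    then show ?thesis using ybound e by (simp add: abs_mult)
  qed
  have xid: "x + B / (2 * D) = (1/2) * (\<Sum>i\<in>A. b i * (e * d i - D) / (D * e * d i))"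
  proof -
    have "(\<Sum>i\<in>A. b i * (e * d i - D) / (D * e * d i)) = (\<Sum>i\<in>A. b i / D - (b i / d i) / e)"
    proof (intro sum.cong refl)
      fix i assume "i \<in> A"
      have "d i \<noteq> 0" "e \<noteq> 0" "D \<noteq> 0" using dpos[of i] e D by auto
      then show "b i * (e * d i - D) / (D * e * d i) = b i / D - (b i / d i) / e"
        by (simp add: field_simps)
    qed
    also have "\<dots> = B / D - S / e"
      by (simp add: sum_subtractf B_def S_def sum_divide_distrib)
    finally have sumeq: "(\<Sum>i\<in>A. b i * (e * d i - D) / (D * e * d i)) = B / D - S / e" .
    have xS: "x = - S / (2 * e)" using im' e by (simp add: field_simps)
    show ?thesis unfolding sumeq xS using e D by (simp add: field_simps)
  qed
  have xbound: "\<bar>x + B / (2 * D)\<bar> \<le> B * e * (L^2 + K1) / D^2"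
  proof -
    have "\<bar>\<Sum>i\<in>A. b i * (e * d i - D) / (D * e * d i)\<bar>
          \<le> (\<Sum>i\<in>A. \<bar>b i * (e * d i - D) / (D * e * d i)\<bar>)" by (rule sum_abs)
    also have "\<dots> \<le> (\<Sum>i\<in>A. b i * (2 * e * (L^2 + K1) / D^2))"
    proof (intro sum_mono)
      fix i assume i: "i \<in> A"
      have num: "\<bar>e * d i - D\<bar> \<le> e * (L^2 + K1)"
      proof -
        have h1: "e * d i - D = e * (x + r i)^2 + (e * y^2 - D)" by (simp add: d_def algebra_simps)
        have "(x + r i)^2 \<le> L^2" using Lb[OF i] by (metis abs_ge_zero power2_abs power_mono)
        then have h3: "e * (x + r i)^2 \<le> e * L^2" using e by (intro mult_left_mono) auto
        have h2: "0 \<le> e * (x + r i)^2" using e by simp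
        have h5: "e * (L^2 + K1) = e * L^2 + e * K1" by (simp add: algebra_simps)
        show ?thesis unfolding abs_le_iff h1 h5 using h2 h3 eyD[unfolded abs_le_iff] by linarith
      qed
      have den: "D * e * d i \<ge> D^2 / 2"
      proof -
        have "e * d i \<ge> D / 2" using dlow[of i] e by (simp add: field_simps)
        then have "D * (e * d i) \<ge> D * (D / 2)" using D by (intro mult_left_mono) auto
        then show ?thesis by (simp add: power2_eq_square mult.assoc)
      qed
      have denpos: "D * e * d i > 0" using D e dpos[of i] by simp
      have "\<bar>b i * (e * d i - D) / (D * e * d i)\<bar> = b i * \<bar>e * d i - D\<bar> / (D * e * d i)"
        by (subst abs_divide, subst abs_of_pos[OF denpos], subst abs_mult,
            subst abs_of_pos[OF bpos[rule_format, OF i]], rule refl)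
      also have "\<dots> \<le> b i * (e * (L^2 + K1)) / (D^2 / 2)"
        using bpos i num den denpos D
        by (intro frac_le mult_left_mono) auto
      also have "\<dots> = b i * (2 * e * (L^2 + K1) / D^2)" by (simp add: field_simps)
      finally show "\<bar>b i * (e * d i - D) / (D * e * d i)\<bar> \<le> b i * (2 * e * (L^2 + K1) / D^2)" .
    qed
    also have "\<dots> = B * (2 * e * (L^2 + K1) / D^2)" unfolding B_def by (rule sum_distrib_right[symmetric])
    finally have "\<bar>\<Sum>i\<in>A. b i * (e * d i - D) / (D * e * d i)\<bar> \<le> B * (2 * e * (L^2 + K1) / D^2)" .
    then have "(1/2) * \<bar>\<Sum>i\<in>A. b i * (e * d i - D) / (D * e * d i)\<bar> \<le> (1/2) * (B * (2 * e * (L^2 + K1) / D^2))"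
      by (rule mult_left_mono) simp
    also have "(1/2) * (B * (2 * e * (L^2 + K1) / D^2)) = B * e * (L^2 + K1) / D^2" by simp
    finally show ?thesis unfolding xid abs_mult by simp
  qed
  show ?thesis using xbound ybound by blast
qed
abbreviation cr :: "real poly \<Rightarrow> complex poly" where "cr p \<equiv> map_poly complex_of_real p"

lemma cr_add: "cr (p + q) = cr p + cr q"
  by (rule poly_eqI) (simp add: coeff_map_poly)
lemma cr_diff: "cr (p - q) = cr p - cr q"
  by (rule poly_eqI) (simp add: coeff_map_poly)
lemma cr_mult: "cr (p * q) = cr p * cr q"
  by (rule poly_eqI) (simp add: coeff_map_poly coeff_mult)
lemma cr_smult: "cr (smult c p) = smult (of_real c) (cr p)"
  by (rule poly_eqI) (simp add: coeff_map_poly)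
lemma cr_sum: "cr (\<Sum>i\<in>A. f i) = (\<Sum>i\<in>A. cr (f i))"
  by (induction A rule: infinite_finite_induct) (auto simp: cr_add)
lemma cr_prod: "cr (\<Prod>i\<in>A. f i) = (\<Prod>i\<in>A. cr (f i))"
  by (induction A rule: infinite_finite_induct) (auto simp: cr_mult)

lemma PNk_eval:
  "poly (cr (PNk N D b r k)) z =
     (of_real D + of_real (1 / (2 * real k - 1)^2) * z^2) * (\<Prod>j\<in>{1..N}. z + of_real (r j))
     - (\<Sum>i\<in>{1..N}. of_real (b i) * (\<Prod>j\<in>{1..N} - {i}. z + of_real (r j)))"
  unfolding PNk_def
  by (simp add: cr_add cr_diff cr_mult cr_smult cr_sum cr_prod poly_sum poly_prod
        map_poly_pCons power2_eq_square algebra_simps)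


lemma root_eqs:
  fixes z :: complex
  assumes root: "poly (cr (PNk N D b r k)) z = 0" and y: "Im z > 0"
  defines "e \<equiv> 1 / (2 * real k - 1)^2"
  shows "D + e * ((Re z)^2 - (Im z)^2) = (\<Sum>i\<in>{1..N}. b i * (Re z + r i) / ((Re z + r i)^2 + (Im z)^2))"
    and "2 * e * Re z = - (\<Sum>i\<in>{1..N}. b i / ((Re z + r i)^2 + (Im z)^2))"
proof -
  define w where "w j = z + of_real (r j)" for j
  have wnz: "w j \<noteq> 0" for j
  proof
    assume "w j = 0"
    then have "Im (w j) = 0" by simp
    then show False using y by (simp add: w_def)
  qed
  define Q where "Q = (\<Prod>j\<in>{1..N}. w j)"
  have Qnz: "Q \<noteq> 0" unfolding Q_def using wnz by simp
  have pd: "(\<Prod>j\<in>{1..N} - {i}. w j) = Q / w i" if "i \<in> {1..N}" for i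
    using prod_diff1[of "{1..N}" w i] wnz that by (simp add: Q_def)
  have sr: "(\<Sum>i\<in>{1..N}. of_real (b i) * prod w ({1..N} - {i})) = (\<Sum>i\<in>{1..N}. of_real (b i) * (Q / w i))"
    by (intro sum.cong refl) (simp only: pd)
  have "0 = (of_real D + of_real e * z^2) * Q - (\<Sum>i\<in>{1..N}. of_real (b i) * prod w ({1..N} - {i}))"
    using root unfolding PNk_eval e_def Q_def w_def[symmetric] by simp
  also note sr
  also have "(\<Sum>i\<in>{1..N}. of_real (b i) * (Q / w i)) = Q * (\<Sum>i\<in>{1..N}. of_real (b i) / w i)"
    by (simp add: sum_distrib_left field_simps)
  finally have "Q * ((of_real D + of_real e * z^2) - (\<Sum>i\<in>{1..N}. of_real (b i) / w i)) = 0"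
    by (simp add: algebra_simps)
  then have E: "of_real D + of_real e * z^2 = (\<Sum>i\<in>{1..N}. of_real (b i) / w i)"
    using Qnz by simp
  have reterm: "Re (of_real (b i) / w i) = b i * (Re z + r i) / ((Re z + r i)^2 + (Im z)^2)" for i
    by (simp add: Re_divide w_def)
  have imterm: "Im (of_real (b i) / w i) = - (b i * Im z / ((Re z + r i)^2 + (Im z)^2))" for i
    by (simp add: Im_divide w_def)
  from arg_cong[OF E, of Re] show "D + e * ((Re z)^2 - (Im z)^2) = (\<Sum>i\<in>{1..N}. b i * (Re z + r i) / ((Re z + r i)^2 + (Im z)^2))"
    by (simp add: reterm power2_eq_square)
  define S where "S = (\<Sum>i\<in>{1..N}. b i / ((Re z + r i)^2 + (Im z)^2))"
  have "(\<Sum>i\<in>{1..N}. b i * Im z / ((Re z + r i)^2 + (Im z)^2)) = Im z * S"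
    unfolding S_def sum_distrib_left by (intro sum.cong refl) simp
  moreover from arg_cong[OF E, of Im] have "e * (2 * Re z * Im z) = - (\<Sum>i\<in>{1..N}. b i * Im z / ((Re z + r i)^2 + (Im z)^2))"
    by (simp add: imterm sum_negf power2_eq_square algebra_simps)
  ultimately have "Im z * (2 * e * Re z + S) = 0" by (simp add: algebra_simps)
  then have "2 * e * Re z + S = 0" using y by simp
  then show "2 * e * Re z = - (\<Sum>i\<in>{1..N}. b i / ((Re z + r i)^2 + (Im z)^2))"
    unfolding S_def by linarith
qed


theorem lemma4p3:
  fixes N k0 :: nat and D :: real and b r :: "nat \<Rightarrow> real"
  assumes "N \<ge> 1" and "D > 0"
    and "\<forall>i\<in>{1..N}. b i > 0"
    and "r 1 > 0" and "\<forall>i\<in>{1..N}. \<forall>j\<in>{1..N}. i < j \<longrightarrow> r i < r j"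
    and "k0 \<ge> 1"
    and "\<forall>k\<ge>k0. root_structure N r (PNk N D b r k)"
  shows "\<exists>M2 > 0. \<exists>M3 > 0. \<exists>K\<ge>k0. \<forall>k\<ge>K. \<forall>z :: complex.
           poly (map_poly complex_of_real (PNk N D b r k)) z = 0 \<and> Im z > 0 \<longrightarrow>
             \<bar>Re z + (\<Sum>j\<in>{1..N}. b j) / (2 * D)\<bar> \<le> M2 / (real k)^2 \<and>
             \<bar>Im z - (2 * real k - 1) * sqrt D\<bar> \<le> M3 / (2 * real k - 1)"
proof -
  note N = assms(1) and D = assms(2) and bpos = assms(3) and r1 = assms(4) and rinc = assms(5)
  define A where "A = {1..N}"
  define B where "B = (\<Sum>j\<in>{1..N}. b j)"
  define R where "R = r N"
  define L where "L = B / D + R"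
  define K1 where "K1 = (B/D)^2 + 2 * B * L / D"
  define M2 where "M2 = B * (L^2 + K1) / D^2"
  define M3 where "M3 = K1 / sqrt D"
  define K where "K = max k0 (nat \<lceil>4 * R^2 / D\<rceil>)"
  have fin: "finite A" and ne: "A \<noteq> {}" using N by (auto simp: A_def)
  have rpos: "\<forall>i\<in>A. 0 < r i \<and> r i \<le> R"
  proof
    fix i assume i: "i \<in> A"
    have iN: "1 \<le> i" "i \<le> N" using i by (auto simp: A_def)
    have "r 1 \<le> r i"
    proof (cases "i = 1")
      case False
      then show ?thesis using rinc[rule_format, of 1 i] iN by simp
    qed simp
    moreover have "r i \<le> r N"
    proof (cases "i = N")
      case False
      then show ?thesis using rinc[rule_format, of i N] iN by simp
    qed simp
    ultimately show "0 < r i \<and> r i \<le> R" using r1 by (simp add: R_def)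
  qed
  have bposA: "\<forall>i\<in>A. b i > 0" using bpos by (simp add: A_def)
  have Bpos: "B > 0" unfolding B_def using fin ne bposA by (intro sum_pos) (auto simp: A_def)
  have R0: "R > 0" using rpos ne by auto
  have L0: "L > 0" using Bpos D R0 unfolding L_def by (simp add: add_pos_pos)
  have K1pos: "K1 > 0"
  proof -
    have "0 < 2 * B * L / D" using Bpos D L0 by (intro divide_pos_pos mult_pos_pos) auto
    moreover have "0 \<le> (B/D)^2" by simp
    ultimately show ?thesis unfolding K1_def by linarith
  qed
  have M2pos: "M2 > 0" using Bpos K1pos D by (simp add: M2_def add_nonneg_pos)
  have M3pos: "M3 > 0" using K1pos D by (simp add: M3_def)
  have main: "\<bar>Re z + B / (2 * D)\<bar> \<le> M2 / (real k)^2 \<and>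
             \<bar>Im z - (2 * real k - 1) * sqrt D\<bar> \<le> M3 / (2 * real k - 1)"
    if k: "k \<ge> K" and root: "poly (map_poly complex_of_real (PNk N D b r k)) z = 0" and y: "Im z > 0"
    for k z
  proof -
    define s where "s = 2 * real k - 1"
    define e where "e = 1 / s^2"
    have k1: "k \<ge> 1" using k assms(6) by (simp add: K_def)
    have sk: "s \<ge> real k" and s1: "s \<ge> 1" using k1 by (auto simp: s_def)
    have e0: "e > 0" using s1 by (simp add: e_def)
    have "4 * R^2 / D \<le> real k" using k unfolding K_def by linarith
    also have "\<dots> \<le> s" by (rule sk)
    also have "\<dots> \<le> s^2" using s1 by (simp add: power2_eq_square)
    finally have "4 * R^2 \<le> D * s^2" using D by (simp add: field_simps)
    then have small: "4 * R^2 * e \<le> D" using s1 by (simp add: e_def field_simps)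
    have eqs: "D + e * ((Re z)^2 - (Im z)^2) = (\<Sum>i\<in>A. b i * (Re z + r i) / ((Re z + r i)^2 + (Im z)^2))"
      "2 * e * Re z = - (\<Sum>i\<in>A. b i / ((Re z + r i)^2 + (Im z)^2))"
      using root_eqs[OF root y] by (simp_all add: e_def s_def A_def)
    have BA: "B = (\<Sum>i\<in>A. b i)" by (simp add: B_def A_def)
    have c: "\<bar>Re z + B / (2 * D)\<bar> \<le> B * e * (L^2 + K1) / D^2 \<and> \<bar>(Im z)^2 - D / e\<bar> \<le> K1"
      using core[OF fin ne y e0 D bposA rpos small eqs] unfolding BA L_def K1_def by simp
    have kk: "(real k)^2 \<le> s^2" using sk k1 by (intro power_mono) auto
    have ek: "e \<le> 1 / (real k)^2"
      unfolding e_def using kk k1 s1 by (intro divide_left_mono) (auto intro!: mult_pos_pos)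
    have "\<bar>Re z + B / (2 * D)\<bar> \<le> M2 * e" using c by (simp add: M2_def field_simps)
    also have "\<dots> \<le> M2 / (real k)^2" using ek M2pos
      by (metis mult_left_mono less_imp_le times_divide_eq_right mult.right_neutral)
    finally have r1': "\<bar>Re z + B / (2 * D)\<bar> \<le> M2 / (real k)^2" .
    have De: "D / e = (s * sqrt D)^2"
    proof -
      have "(s * sqrt D)^2 = s^2 * (sqrt D)^2" by (rule power_mult_distrib)
      also have "(sqrt D)^2 = D" using D by simp
      finally show ?thesis using s1 by (simp add: e_def)
    qed
    have sD: "s * sqrt D > 0" using s1 D by simp
    have "\<bar>Im z - s * sqrt D\<bar> * (Im z + s * sqrt D) = \<bar>(Im z)^2 - D / e\<bar>"
    proof -
      have "(Im z)^2 - D / e = (Im z - s * sqrt D) * (Im z + s * sqrt D)"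
        unfolding De by (simp add: power2_eq_square algebra_simps)
      then have "\<bar>(Im z)^2 - D / e\<bar> = \<bar>Im z - s * sqrt D\<bar> * \<bar>Im z + s * sqrt D\<bar>"
        by (simp add: abs_mult)
      then show ?thesis using y sD by simp
    qed
    also have "\<dots> \<le> K1" using c by simp
    finally have h1: "\<bar>Im z - s * sqrt D\<bar> * (Im z + s * sqrt D) \<le> K1" .
    have h2: "\<bar>Im z - s * sqrt D\<bar> * (s * sqrt D) \<le> \<bar>Im z - s * sqrt D\<bar> * (Im z + s * sqrt D)"
      using y by (intro mult_left_mono) auto
    have "\<bar>Im z - s * sqrt D\<bar> * (s * sqrt D) \<le> K1" using order_trans[OF h2 h1] .
    then have "\<bar>Im z - s * sqrt D\<bar> \<le> K1 / (s * sqrt D)" using sD by (simp add: field_simps)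
    also have "\<dots> = M3 / s" by (simp add: M3_def)
    finally show ?thesis using r1' by (simp add: s_def)
  qed
  have "\<forall>k\<ge>K. \<forall>z :: complex.
           poly (map_poly complex_of_real (PNk N D b r k)) z = 0 \<and> Im z > 0 \<longrightarrow>
             \<bar>Re z + (\<Sum>j\<in>{1..N}. b j) / (2 * D)\<bar> \<le> M2 / (real k)^2 \<and>
             \<bar>Im z - (2 * real k - 1) * sqrt D\<bar> \<le> M3 / (2 * real k - 1)"
    using main unfolding B_def by blast
  moreover have "K \<ge> k0" by (simp add: K_def)
  ultimately show ?thesis using M2pos M3pos by blast
qed

end
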